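(* Let $T$ be a tree, $D\subseteq V(T)$, and let $\mathcal X_T$ be the hypergraph associated with $T$. Then $(T,D)$ is MBD Dominator-critical if and only if $\mathcal X_T$ has at least one edge and $D$ is a minimal transversal of $\mathcal X_T$.
   Context: For a tree $T'$, $S(T')$ is obtained by subdividing each edge of $T'$ exactly once; $\mathcal S=\{S(T'):T'\text{ a tree}\}$ and $X(S(T'))=V(T')$ (with $S(P_1)=P_1$, $X(P_1)=V(P_1)$). $F\in\mathcal S$ is a substructure in $T$ if $F$ is a subgraph of $T$ and $\deg_T(v)=\deg_F(v)$ for all $v\in X(F)$. The hypergraph $\mathcal X_T$ has vertex set $V(T)$ and edge set $\{X(F): F\in\mathcal S \text{ is a substructure in } T\}$. A transversal of a hypergraph is a vertex set meeting every edge; it is minimal if no proper subset is a transversal. In the MBD game on a predominated graph $(G,D)$, $D\subseteq V(G)$, Staller and Dominator alternately claim unclaimed vertices of $V(G)$, Staller first; Staller wins if she claims all of $N_G[v]$ for some $v\in V(G)\setminus D$, Dominator wins otherwise. $(G,D)$ is MBD Dominator-critical if $D\neq\emptyset$, Dominator wins on $(G,D)$, and Staller wins on $(G,D\setminus\{v\})$ for every $v\in D$. *)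

theory Defs
  imports Main
begin

definition graph :: "'a set \<Rightarrow> 'a set set \<Rightarrow> bool" where
  "graph V E \<longleftrightarrow> (\<forall>e\<in>E. card e = 2 \<and> e \<subseteq> V)"

definition connected_graph :: "'a set \<Rightarrow> 'a set set \<Rightarrow> bool" where
  "connected_graph V E \<longleftrightarrow>
     (\<forall>u\<in>V. \<forall>v\<in>V. (\<lambda>x y. {x, y} \<in> E)\<^sup>*\<^sup>* u v)"

definition has_cycle :: "'a set set \<Rightarrow> bool" where
  "has_cycle E \<longleftrightarrow> (\<exists>cs. length cs \<ge> 3 \<and> distinct cs \<and>
     (\<forall>i < length cs. {cs ! i, cs ! ((i + 1) mod length cs)} \<in> E))"

definition tree :: "'a set \<Rightarrow> 'a set set \<Rightarrow> bool" where
  "tree V E \<longleftrightarrow> graph V E \<and> finite V \<and> V \<noteq> {} \<and> connected_graph V E \<and> \<not> has_cycle E"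

definition deg :: "'a set set \<Rightarrow> 'a \<Rightarrow> nat" where
  "deg E v = card {e \<in> E. v \<in> e}"

definition closed_nbhd :: "'a set \<Rightarrow> 'a set set \<Rightarrow> 'a \<Rightarrow> 'a set" where
  "closed_nbhd V E v = insert v {u \<in> V. {u, v} \<in> E}"

text \<open>(VF, EF) is (a copy of) the subdivision S(T') of a tree T' = (X, E'), where the
  original vertices of T' form X = X(F), and each edge e of T' is subdivided by the
  new vertex s e.\<close>

definition is_subdivision :: "'a set \<Rightarrow> 'a set set \<Rightarrow> 'a set \<Rightarrow> bool" where
  "is_subdivision VF EF X \<longleftrightarrow>
     (\<exists>E' (s :: 'a set \<Rightarrow> 'a). tree X E' \<and> inj_on s E' \<and> s ` E' \<inter> X = {} \<and>
        VF = X \<union> s ` E' \<and> EF = {{x, s e} | x e. e \<in> E' \<and> x \<in> e})"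

definition substructure :: "'a set \<Rightarrow> 'a set set \<Rightarrow> 'a set \<Rightarrow> 'a set set \<Rightarrow> 'a set \<Rightarrow> bool" where
  "substructure V E VF EF X \<longleftrightarrow> is_subdivision VF EF X \<and> VF \<subseteq> V \<and> EF \<subseteq> E \<and>
     (\<forall>v\<in>X. deg E v = deg EF v)"

text \<open>Edge set of the hypergraph X_T (its vertex set is V).\<close>

definition hyp_X :: "'a set \<Rightarrow> 'a set set \<Rightarrow> 'a set set" where
  "hyp_X V E = {X. \<exists>VF EF. substructure V E VF EF X}"

definition transversal :: "'a set \<Rightarrow> 'a set set \<Rightarrow> 'a set \<Rightarrow> bool" where
  "transversal V H T \<longleftrightarrow> T \<subseteq> V \<and> (\<forall>h\<in>H. h \<inter> T \<noteq> {})"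

definition minimal_transversal :: "'a set \<Rightarrow> 'a set set \<Rightarrow> 'a set \<Rightarrow> bool" where
  "minimal_transversal V H T \<longleftrightarrow> transversal V H T \<and> (\<forall>T'. T' \<subset> T \<longrightarrow> \<not> transversal V H T')"

text \<open>Maker-Breaker domination game: position (S, Dm) = vertices claimed by Staller and
  Dominator, Staller to move. staller_wins V E D S Dm: Staller can force a win.\<close>

inductive staller_wins :: "'a set \<Rightarrow> 'a set set \<Rightarrow> 'a set \<Rightarrow> 'a set \<Rightarrow> 'a set \<Rightarrow> bool"
  for V E D where
  won: "v \<in> V - D \<Longrightarrow> closed_nbhd V E v \<subseteq> S \<Longrightarrow> staller_wins V E D S Dm"
| move: "x \<in> V - (S \<union> Dm) \<Longrightarrow>
     (V - (insert x S \<union> Dm) = {} \<longrightarrow> (\<exists>v\<in>V - D. closed_nbhd V E v \<subseteq> insert x S)) \<Longrightarrow>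
     (\<forall>y \<in> V - (insert x S \<union> Dm). staller_wins V E D (insert x S) (insert y Dm)) \<Longrightarrow>
     staller_wins V E D S Dm"

definition dominator_wins :: "'a set \<Rightarrow> 'a set set \<Rightarrow> 'a set \<Rightarrow> bool" where
  "dominator_wins V E D \<longleftrightarrow> \<not> staller_wins V E D {} {}"

definition MBD_dominator_critical :: "'a set \<Rightarrow> 'a set set \<Rightarrow> 'a set \<Rightarrow> bool" where
  "MBD_dominator_critical V E D \<longleftrightarrow> D \<noteq> {} \<and> dominator_wins V E D \<and>
     (\<forall>v\<in>D. \<not> dominator_wins V E (D - {v}))"

end

theory Submission
  imports Defs
begin


fun walk :: "'a set set \<Rightarrow> 'a list \<Rightarrow> bool" where
  "walk E [] = False"
| "walk E [x] = True"
| "walk E (x # y # xs) = ({x, y} \<in> E \<and> walk E (y # xs))"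

lemma walk_Cons: "walk E (x # xs) \<longleftrightarrow> (xs = [] \<or> ({x, hd xs} \<in> E \<and> walk E xs))"
  by (cases xs) auto

lemma walk_append: "walk E (xs @ y # zs) \<longleftrightarrow> walk E (xs @ [y]) \<and> walk E (y # zs)"
  by (induction xs) (auto simp: walk_Cons hd_append)

lemma walk_nth: "walk E xs \<Longrightarrow> Suc i < length xs \<Longrightarrow> {xs!i, xs!Suc i} \<in> E"
proof (induction E xs arbitrary: i rule: walk.induct)
  case (3 E x y xs)
  then show ?case by (cases i) auto
qed auto

lemma walk_mono: "walk E xs \<Longrightarrow> E \<subseteq> E' \<Longrightarrow> walk E' xs"
  by (induction E xs rule: walk.induct) auto

lemma walk_rev: "walk E xs \<Longrightarrow> walk E (rev xs)"
proof (induction E xs rule: walk.induct)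
  case (3 E x y xs)
  then have "walk E (rev xs @ [y])" by simp
  moreover have "walk E [y, x]" using 3 by (simp add: insert_commute)
  ultimately show ?case using walk_append[of E "rev xs" y "[x]"] by simp
qed auto

lemma cycle_of_walk:
  assumes "distinct ys" "walk E ys" "3 \<le> length ys" "{last ys, hd ys} \<in> E"
  shows "has_cycle E"
  unfolding has_cycle_def
proof (intro exI[of _ ys] conjI allI impI)
  fix i assume i: "i < length ys"
  show "{ys ! i, ys ! ((i + 1) mod length ys)} \<in> E"
  proof (cases "Suc i < length ys")
    case True
    then show ?thesis using walk_nth[OF assms(2) True] by simp
  next
    case False
    then have "i = length ys - 1" using i by simp
    moreover have "(i+1) mod length ys = 0"
    proof -
      have "i + 1 = length ys" using i False by linarith
      then show ?thesis by simp
    qed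
    ultimately show ?thesis using assms(3,4)
      by (metis hd_conv_nth last_conv_nth list.size(3) not_numeral_le_zero)
  qed
qed (use assms in auto)

definition nbs :: "'a set set \<Rightarrow> 'a \<Rightarrow> 'a set" where
  "nbs E v = {u. {u, v} \<in> E}"

lemma graph_edge: "graph V E \<Longrightarrow> {a, b} \<in> E \<Longrightarrow> a \<noteq> b \<and> a \<in> V \<and> b \<in> V"
  unfolding graph_def by (cases "a = b") auto

lemma graph_edge_form: "graph V E \<Longrightarrow> e \<in> E \<Longrightarrow> \<exists>a b. e = {a, b} \<and> a \<noteq> b"
  unfolding graph_def card_2_iff by blast

lemma walk_set: "graph V E \<Longrightarrow> walk E xs \<Longrightarrow> length xs \<ge> 2 \<Longrightarrow> set xs \<subseteq> V"
proof (induction E xs rule: walk.induct)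
  case (3 E x y xs)
  then show ?case using graph_edge[of V E x y] by (cases xs) auto
qed auto



lemma len2: "2 \<le> length xs \<Longrightarrow> \<exists>a b r. xs = a # b # r"
  by (cases xs; cases "tl xs") auto

lemma two_leaves:
  assumes G: "graph V E" and fin: "finite V" and nc: "\<not> has_cycle E" and e: "e \<in> E"
  shows "\<exists>x y u w. x \<noteq> y \<and> nbs E x = {u} \<and> nbs E y = {w}"
proof -
  define P where "P = {xs. set xs \<subseteq> V \<and> distinct xs \<and> walk E xs}"
  have finP: "finite P" unfolding P_def
    by (rule finite_subset[OF _ finite_subset_distinct[OF fin]]) auto
  obtain a b where ab: "e = {a, b}" "a \<noteq> b" using graph_edge_form[OF G e] by blast
  have abP: "[a, b] \<in> P" unfolding P_def using ab e graph_edge[OF G, of a b] by auto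
  define m where "m = Max (length ` P)"
  have maxm: "length ys \<le> m" if "ys \<in> P" for ys
    unfolding m_def using finP that by simp
  have m2: "m \<ge> 2" using maxm[OF abP] by simp
  obtain xs where xs: "xs \<in> P" "length xs = m"
    unfolding m_def using Max_in[of "length ` P"] finP abP by fastforce
  have claim: "nbs E (hd ys) = {ys ! 1}" if ys: "ys \<in> P" "length ys = m" for ys
  proof -
    obtain y0 y1 r where yr: "ys = y0 # y1 # r" using ys m2
      using len2 by blast
    have ysP: "set ys \<subseteq> V" "distinct ys" "walk E ys" using ys(1) unfolding P_def by auto
    have e01: "{y0, y1} \<in> E" using ysP(3) yr by simp
    have "u = y1" if u: "{u, y0} \<in> E" for u
    proof (rule ccontr)
      assume uy1: "u \<noteq> y1"
      have uV: "u \<noteq> y0 \<and> u \<in> V" using graph_edge[OF G u] by simp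
      show False
      proof (cases "u \<in> set ys")
        case False
        have "u # ys \<in> P" unfolding P_def using ysP uV False u yr by (auto simp: insert_commute)
        then show False using maxm ys(2) by fastforce
      next
        case True
        then have "u \<in> set r" using uV uy1 yr by simp
        then obtain r1 r2 where r: "r = r1 @ u # r2" by (meson split_list)
        define cs where "cs = y0 # y1 # r1 @ [u]"
        have "ys = cs @ r2" using yr r cs_def by simp
        then have "distinct cs" using ysP(2) by simp
        moreover have "walk E cs" using ysP(3) yr r walk_append[of E "y0 # y1 # r1" u r2]
          unfolding cs_def by simp
        moreover have "3 \<le> length cs" unfolding cs_def by simp
        moreover have "{last cs, hd cs} \<in> E" unfolding cs_def using u by simp
        ultimately show False using cycle_of_walk nc by blast
      qed
    qed
    then show ?thesis unfolding nbs_def using yr e01 by (auto simp: insert_commute)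
  qed
  have revP: "rev xs \<in> P" using xs(1) walk_rev unfolding P_def by auto
  have "hd xs \<noteq> hd (rev xs)"
  proof -
    obtain y0 y1 r where yr: "xs = y0 # y1 # r" using xs m2
      using len2 by blast
    have "distinct xs" using xs(1) unfolding P_def by auto
    then have "y0 \<notin> set (y1 # r)" using yr by simp
    moreover have "last (y1 # r) \<in> set (y1 # r)" by (rule last_in_set) simp
    moreover have "hd (rev xs) = last (y1 # r)" using yr by (simp add: hd_rev)
    ultimately show ?thesis using yr by auto
  qed
  then show ?thesis using claim[OF xs] claim[OF revP] xs(2) by auto
qed

lemma leaf_or_isolated:
  assumes G: "graph V E" and fin: "finite V" and nc: "\<not> has_cycle E" and x: "x \<in> V"
  shows "\<exists>y\<in>V. nbs E y = {} \<or> (\<exists>u. nbs E y = {u})"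
proof (cases "E = {}")
  case True then show ?thesis using x unfolding nbs_def by auto
next
  case False
  then obtain e where "e \<in> E" by blast
  from two_leaves[OF G fin nc this] obtain y u where "nbs E y = {u}" by blast
  moreover then have "y \<in> V" unfolding nbs_def using graph_edge[OF G] by blast
  ultimately show ?thesis by blast
qed



lemma rtranclp_walk:
  assumes "(\<lambda>x y. {x, y} \<in> E)\<^sup>*\<^sup>* u v"
  shows "\<exists>ws. walk E ws \<and> hd ws = u \<and> last ws = v"
  using assms
proof (induction rule: rtranclp_induct)
  case base
  then show ?case by (intro exI[of _ "[u]"]) simp
next
  case (step y z)
  then obtain ws where ws: "walk E ws" "hd ws = u" "last ws = y" by blast
  have ne: "ws \<noteq> []" using ws(1) by auto
  then have wsd: "ws = butlast ws @ [y]" using append_butlast_last_id[OF ne] ws(3) by simp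
  have "walk E (butlast ws @ [y] @ [z])"
    using walk_append[of E "butlast ws" y "[z]"] ws(1) wsd step(2) by simp
  moreover have "hd (butlast ws @ [y] @ [z]) = u"
  proof -
    have "hd (butlast ws @ [y] @ [z]) = hd (butlast ws @ [y])" by (cases "butlast ws") auto
    also have "\<dots> = hd ws" using arg_cong[of _ _ hd, OF wsd] by simp
    finally show ?thesis using ws(2) by simp
  qed
  ultimately show ?case by (intro exI[of _ "butlast ws @ [y] @ [z]"]) simp
qed

lemma walk_distinct:
  "walk E ws \<Longrightarrow> \<exists>ws'. walk E ws' \<and> distinct ws' \<and> hd ws' = hd ws \<and> last ws' = last ws"
proof (induction "length ws" arbitrary: ws rule: less_induct)
  case less
  show ?case
  proof (cases "distinct ws")
    case True then show ?thesis using less.prems by blast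
  next
    case False
    then obtain xs ys zs y where d: "ws = xs @ [y] @ ys @ [y] @ zs" using not_distinct_decomp by blast
    have w1: "walk E (xs @ [y])" using less.prems d walk_append[of E xs y "ys @ [y] @ zs"] by simp
    have w2: "walk E (y # zs)" using less.prems d walk_append[of E "xs @ [y] @ ys" y zs] by simp
    have w: "walk E (xs @ y # zs)" using w1 w2 walk_append[of E xs y zs] by simp
    have "hd (xs @ y # zs) = hd ws" using d by (cases xs) auto
    moreover have "last (xs @ y # zs) = last ws" using d by (cases zs) auto
    moreover have "length (xs @ y # zs) < length ws" using d by simp
    then obtain ws' where "walk E ws' \<and> distinct ws' \<and> hd ws' = hd (xs @ y # zs) \<and> last ws' = last (xs @ y # zs)"
      using less.hyps w by blast
    ultimately show ?thesis by auto
  qed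
qed

lemma walk_elems: "walk E ws \<Longrightarrow> 2 \<le> length ws \<Longrightarrow> z \<in> set ws \<Longrightarrow> \<exists>e\<in>E. z \<in> e"
proof (induction E ws rule: walk.induct)
  case (3 E x y xs)
  then show ?case by (cases xs) auto
qed auto

lemma cycle_through:
  assumes nc: "\<not> has_cycle E" and sub: "E' \<subseteq> E" and av: "\<forall>e\<in>E'. p \<notin> e"
    and conn: "(\<lambda>x y. {x, y} \<in> E')\<^sup>*\<^sup>* u v" and uv: "u \<noteq> v"
    and up: "{u, p} \<in> E" and vp: "{v, p} \<in> E"
  shows False
proof -
  obtain ws0 where w0: "walk E' ws0" "hd ws0 = u" "last ws0 = v" using rtranclp_walk[OF conn] by blast
  obtain ws where ws: "walk E' ws" "distinct ws" "hd ws = u" "last ws = v"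
    using walk_distinct[OF w0(1)] w0(2,3) by blast
  have ne: "ws \<noteq> []" using ws(1) by auto
  have l2: "2 \<le> length ws"
  proof (rule ccontr)
    assume "\<not> 2 \<le> length ws"
    moreover have "length ws \<noteq> 0" using ne by simp
    ultimately have "length ws = 1" by linarith
    then have "ws = [hd ws]" by (cases ws; cases "tl ws") auto
    then obtain z where "ws = [z]" by blast
    then show False using ws uv by simp
  qed
  have pn: "p \<notin> set ws" using walk_elems[OF ws(1) l2] av by blast
  have "walk E (p # ws)" using walk_mono[OF ws(1) sub] ws(3) up ne by (simp add: walk_Cons insert_commute)
  moreover have "distinct (p # ws)" using ws(2) pn by simp
  moreover have "3 \<le> length (p # ws)" using l2 by simp
  moreover have "{last (p # ws), hd (p # ws)} \<in> E" using ws(4) ne vp by simp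
  ultimately show False using cycle_of_walk nc by blast
qed



lemma edges_at: "graph V E \<Longrightarrow> {e\<in>E. x \<in> e} = (\<lambda>u. {x, u}) ` nbs E x"
  unfolding nbs_def
proof (intro set_eqI iffI)
  fix e assume G: "graph V E" and e: "e \<in> {e \<in> E. x \<in> e}"
  then obtain a b where ab: "e = {a, b}" "a \<noteq> b" using graph_edge_form by blast
  then show "e \<in> (\<lambda>u. {x, u}) ` {u. {u, x} \<in> E}"
    using e by (auto simp: insert_commute image_iff)
qed (auto simp: insert_commute)

lemma has_cycle_mono: "has_cycle A \<Longrightarrow> A \<subseteq> B \<Longrightarrow> has_cycle B"
  unfolding has_cycle_def by blast

lemma staller_gen:
  "finite X \<Longrightarrow> X \<noteq> {} \<Longrightarrow> graph X Et \<Longrightarrow> \<not> has_cycle Et \<Longrightarrow> inj_on s Et \<Longrightarrow>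
   s ` Et \<inter> X = {} \<Longrightarrow> X \<inter> D = {} \<Longrightarrow> X \<subseteq> V \<Longrightarrow> s ` Et \<subseteq> V \<Longrightarrow>
   (X \<union> s ` Et) \<inter> (S \<union> Dm) = {} \<Longrightarrow>
   (\<forall>x\<in>X. closed_nbhd V E x \<subseteq> insert x (s ` {e\<in>Et. x \<in> e}) \<union> S) \<Longrightarrow>
   staller_wins V E D S Dm"
proof (induction "card X" arbitrary: X Et S Dm rule: less_induct)
  case less
  note fin = less.prems(1) and ne = less.prems(2) and G = less.prems(3) and nc = less.prems(4)
    and inj = less.prems(5) and dj = less.prems(6) and XD = less.prems(7) and XV = less.prems(8)
    and sV = less.prems(9) and dj2 = less.prems(10) and nb = less.prems(11)
  obtain x0 where "x0 \<in> X" using ne by blast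
  from leaf_or_isolated[OF G fin nc this] obtain x where x: "x \<in> X"
    and xl: "nbs Et x = {} \<or> (\<exists>u. nbs Et x = {u})" by blast
  have xV: "x \<in> V - (S \<union> Dm)" using x XV dj2 by blast
  have xD: "x \<in> V - D" using x XV XD by blast
  show ?case
  proof (cases "nbs Et x = {}")
    case True
    then have "{e\<in>Et. x \<in> e} = {}" using edges_at[OF G, of x] by simp
    then have Nx: "closed_nbhd V E x \<subseteq> insert x S" using nb x by auto
    show ?thesis
    proof (rule staller_wins.move[OF xV])
      show "V - (insert x S \<union> Dm) = {} \<longrightarrow> (\<exists>v\<in>V - D. closed_nbhd V E v \<subseteq> insert x S)"
        using Nx xD by blast
      show "\<forall>y\<in>V - (insert x S \<union> Dm). staller_wins V E D (insert x S) (insert y Dm)"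
        using staller_wins.won[OF xD Nx] by blast
    qed
  next
    case False
    then obtain y where y: "nbs Et x = {y}" using xl by blast
    define e where "e = {x, y}"
    have ex: "{f\<in>Et. x \<in> f} = {e}" using edges_at[OF G, of x] y e_def by simp
    then have eEt: "e \<in> Et" by blast
    have yX: "y \<in> X" "y \<noteq> x" using graph_edge[OF G, of y x] y unfolding nbs_def by auto
    define a where "a = s e"
    have aX: "a \<notin> X" using dj eEt a_def by blast
    have aV: "a \<in> V - (S \<union> Dm)" using sV dj2 eEt a_def by blast
    have Nx0: "closed_nbhd V E x \<subseteq> insert x (s ` {e\<in>Et. x \<in> e}) \<union> S" using bspec[OF nb x] .
    have "s ` {e\<in>Et. x \<in> e} = {a}" using ex a_def by simp
    then have Nx: "closed_nbhd V E x \<subseteq> insert x (insert a S)" using Nx0 by simp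
    show ?thesis
    proof (rule staller_wins.move[OF aV])
      show "V - (insert a S \<union> Dm) = {} \<longrightarrow> (\<exists>v\<in>V - D. closed_nbhd V E v \<subseteq> insert a S)"
        using xV aX x by blast
      show "\<forall>z\<in>V - (insert a S \<union> Dm). staller_wins V E D (insert a S) (insert z Dm)"
      proof
        fix z assume z: "z \<in> V - (insert a S \<union> Dm)"
        show "staller_wins V E D (insert a S) (insert z Dm)"
        proof (cases "z = x")
          case False
          have xV2: "x \<in> V - (insert a S \<union> insert z Dm)" using xV aX x False by blast
          show ?thesis
          proof (rule staller_wins.move[OF xV2])
            show "V - (insert x (insert a S) \<union> insert z Dm) = {} \<longrightarrow>
                (\<exists>v\<in>V - D. closed_nbhd V E v \<subseteq> insert x (insert a S))"
              using Nx xD by blast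
            show "\<forall>y\<in>V - (insert x (insert a S) \<union> insert z Dm).
                staller_wins V E D (insert x (insert a S)) (insert y (insert z Dm))"
              using staller_wins.won[OF xD Nx] by blast
          qed
        next
          case True
          have card: "card (X - {x}) < card X" using card_Diff1_less[OF fin x] .
          have G': "graph (X - {x}) (Et - {e})"
            using G ex unfolding graph_def by blast
          have nc': "\<not> has_cycle (Et - {e})" using nc has_cycle_mono by blast
          have ne': "X - {x} \<noteq> {}" using yX by blast
          have ae: "a \<notin> s ` (Et - {e})" using inj eEt a_def by (auto simp: inj_on_def)
          have xs: "x \<notin> s ` Et" using dj x by blast
          have dj2': "((X - {x}) \<union> s ` (Et - {e})) \<inter> (insert a S \<union> insert x Dm) = {}"
            using dj2 ae aX xs True by blast
          have nb': "\<forall>w\<in>X - {x}. closed_nbhd V E w \<subseteq> insert w (s ` {f\<in>Et - {e}. w \<in> f}) \<union> insert a S"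
          proof
            fix w assume w: "w \<in> X - {x}"
            have "s ` {f\<in>Et. w \<in> f} \<subseteq> insert a (s ` {f\<in>Et - {e}. w \<in> f})" using a_def by blast
            moreover have "closed_nbhd V E w \<subseteq> insert w (s ` {f\<in>Et. w \<in> f}) \<union> S"
              using bspec[OF nb, of w] w by blast
            ultimately show "closed_nbhd V E w \<subseteq> insert w (s ` {f\<in>Et - {e}. w \<in> f}) \<union> insert a S"
              by blast
          qed
          have f1: "finite (X - {x})" using fin by simp
          have f2: "inj_on s (Et - {e})" using inj by (rule inj_on_subset) blast
          have f3: "s ` (Et - {e}) \<inter> (X - {x}) = {}" using dj by blast
          have f4: "(X - {x}) \<inter> D = {}" using XD by blast
          have f5: "X - {x} \<subseteq> V" using XV by blast
          have f6: "s ` (Et - {e}) \<subseteq> V" using sV by blast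
          show ?thesis unfolding True
            by (rule less.hyps[OF card f1 ne' G' nc' f2 f3 f4 f5 f6 dj2' nb'])
        qed
      qed
    qed
  qed
qed

lemma finite_edges: "graph V E \<Longrightarrow> finite V \<Longrightarrow> finite E"
  unfolding graph_def by (meson Pow_iff finite_Pow_iff finite_subset subsetI)

lemma sub_nbhd:
  assumes G: "graph V E" and fin: "finite V" and sub: "substructure V E VF EF X"
  shows "\<exists>Et s. tree X Et \<and> inj_on s Et \<and> s ` Et \<inter> X = {} \<and> VF = X \<union> s ` Et \<and>
     EF = {{x, s e} |x e. e \<in> Et \<and> x \<in> e} \<and> VF \<subseteq> V \<and> EF \<subseteq> E \<and>
     (\<forall>x\<in>X. closed_nbhd V E x \<subseteq> insert x (s ` {e\<in>Et. x \<in> e})) \<and>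
     (\<forall>x\<in>X. {f\<in>E. x \<in> f} = {f\<in>EF. x \<in> f})"
proof -
  from sub obtain Et s where st: "tree X Et" "inj_on s Et" "s ` Et \<inter> X = {}" "VF = X \<union> s ` Et"
    "EF = {{x, s e} |x e. e \<in> Et \<and> x \<in> e}" and VF: "VF \<subseteq> V" and EF: "EF \<subseteq> E"
    and dg: "\<forall>v\<in>X. deg E v = deg EF v"
    unfolding substructure_def is_subdivision_def by blast
  have finE: "finite E" using finite_edges[OF G fin] .
  have eq: "{f\<in>E. x \<in> f} = {f\<in>EF. x \<in> f}" if x: "x \<in> X" for x
  proof -
    have "{f\<in>EF. x \<in> f} \<subseteq> {f\<in>E. x \<in> f}" using EF by blast
    moreover have "card {f\<in>EF. x \<in> f} = card {f\<in>E. x \<in> f}" using dg x unfolding deg_def by simp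
    ultimately show ?thesis using finE by (metis (no_types, lifting) card_subset_eq finite_subset mem_Collect_eq subsetI)
  qed
  have "closed_nbhd V E x \<subseteq> insert x (s ` {e\<in>Et. x \<in> e})" if x: "x \<in> X" for x
  proof
    fix u assume u: "u \<in> closed_nbhd V E x"
    show "u \<in> insert x (s ` {e\<in>Et. x \<in> e})"
    proof (cases "u = x")
      case False
      then have "{u, x} \<in> E" using u unfolding closed_nbhd_def by auto
      then have "{u, x} \<in> EF" using eq[OF x] by blast
      then obtain x' f where f: "{u, x} = {x', s f}" "f \<in> Et" "x' \<in> f" using st(5) by blast
      have "s f \<noteq> x" using st(3) f(2) x by blast
      then have "x = x'" "u = s f" using f(1) False by (auto simp: doubleton_eq_iff)
      then show ?thesis using f by blast
    qed simp
  qed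
  then have A: "\<forall>x\<in>X. closed_nbhd V E x \<subseteq> insert x (s ` {e\<in>Et. x \<in> e})" by blast
  have B: "\<forall>x\<in>X. {f\<in>E. x \<in> f} = {f\<in>EF. x \<in> f}" using eq by blast
  show ?thesis using st VF EF A B by (intro exI[of _ Et] exI[of _ s] conjI) assumption+
qed

lemma staller_from_sub:
  assumes G: "graph V E" and fin: "finite V" and sub: "substructure V E VF EF X" and XD: "X \<inter> D = {}"
  shows "staller_wins V E D {} {}"
proof -
  from sub_nbhd[OF G fin sub] obtain Et s where st: "tree X Et" "inj_on s Et" "s ` Et \<inter> X = {}"
    "VF = X \<union> s ` Et" "VF \<subseteq> V"
    and nb: "\<forall>x\<in>X. closed_nbhd V E x \<subseteq> insert x (s ` {e\<in>Et. x \<in> e})"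
    apply (elim exE conjE) apply (rule that) apply assumption+ done
  show ?thesis
    by (rule staller_gen[where X = X and Et = Et and s = s])
       (use st nb XD in \<open>auto simp: tree_def\<close>)
qed



definition pairing :: "'a set \<Rightarrow> 'a set set \<Rightarrow> 'a set \<Rightarrow> 'a set set \<Rightarrow> bool" where
  "pairing V E D P \<longleftrightarrow> (\<forall>p\<in>P. \<exists>a b. p = {a, b} \<and> a \<noteq> b \<and> a \<in> V \<and> b \<in> V) \<and>
     (\<forall>p\<in>P. \<forall>q\<in>P. p \<noteq> q \<longrightarrow> p \<inter> q = {}) \<and>
     (\<forall>w\<in>V - D. \<exists>p\<in>P. p \<subseteq> closed_nbhd V E w)"

definition pinv :: "'a set set \<Rightarrow> 'a set \<Rightarrow> 'a set \<Rightarrow> bool" where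
  "pinv P S Dm \<longleftrightarrow> S \<inter> Dm = {} \<and> (\<forall>p\<in>P. \<forall>a\<in>p. \<forall>b\<in>p. a \<noteq> b \<longrightarrow> a \<in> S \<longrightarrow> b \<in> Dm)"

lemma pairingD1: "pairing V E D P \<Longrightarrow> p \<in> P \<Longrightarrow> \<exists>a b. p = {a, b} \<and> a \<noteq> b \<and> a \<in> V \<and> b \<in> V"
  by (simp add: pairing_def)
lemma pairingD2: "pairing V E D P \<Longrightarrow> p \<in> P \<Longrightarrow> q \<in> P \<Longrightarrow> p \<noteq> q \<Longrightarrow> p \<inter> q = {}"
  by (simp add: pairing_def)
lemma pairingD3: "pairing V E D P \<Longrightarrow> w \<in> V - D \<Longrightarrow> \<exists>p\<in>P. p \<subseteq> closed_nbhd V E w"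
  by (simp add: pairing_def)

lemma pinvD: "pinv P S Dm \<Longrightarrow> p \<in> P \<Longrightarrow> a \<in> p \<Longrightarrow> b \<in> p \<Longrightarrow> a \<noteq> b \<Longrightarrow> a \<in> S \<Longrightarrow> b \<in> Dm"
  unfolding pinv_def by blast

lemma not_won:
  assumes "pairing V E D P" "pinv P S Dm" "v \<in> V - D" "closed_nbhd V E v \<subseteq> S"
  shows False
proof -
  obtain p where p: "p \<in> P" "p \<subseteq> closed_nbhd V E v" using pairingD3[OF assms(1,3)] by blast
  then obtain a b where ab: "p = {a, b}" "a \<noteq> b" using pairingD1[OF assms(1)] by blast
  have "a \<in> S" "b \<in> S" using p ab assms(4) by auto
  then have "b \<in> Dm" using pinvD[OF assms(2) p(1), of a b] ab by blast
  moreover have "S \<inter> Dm = {}" using assms(2) unfolding pinv_def by blast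
  ultimately show False using \<open>b \<in> S\<close> by blast
qed

lemma dom_inv:
  assumes "staller_wins V E D S Dm"
  shows "pairing V E D P \<longrightarrow> pinv P S Dm \<longrightarrow> False"
  using assms
proof (induction rule: staller_wins.induct)
  case (won v S Dm)
  show ?case using not_won[OF _ _ won.hyps(1) won.hyps(2)] by blast
next
  case (move x S Dm)
  show ?case
  proof (intro impI)
  assume pr: "pairing V E D P" "pinv P S Dm"
  note PV = pairingD1[OF pr(1)] and Pd = pairingD2[OF pr(1)]
  have inv1: "S \<inter> Dm = {}" using pr(2) unfolding pinv_def by blast
  note inv2 = pinvD[OF pr(2)]
  show False
  proof (cases "\<exists>p\<in>P. x \<in> p \<and> (\<exists>b\<in>p. b \<noteq> x \<and> b \<notin> Dm)")
    case True
    then obtain p b where pb: "p \<in> P" "x \<in> p" "b \<in> p" "b \<noteq> x" "b \<notin> Dm" by blast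
    obtain a1 b1 where p12: "p = {a1, b1}" "a1 \<in> V" "b1 \<in> V" using PV[OF pb(1)] by blast
    have bV: "b \<in> V" using p12 pb by auto
    have bS: "b \<notin> S" using inv2[OF pb(1) pb(3) pb(2) pb(4)] move.hyps(1) by blast
    have bfree: "b \<in> V - (insert x S \<union> Dm)" using bV bS pb by blast
    have "pinv P (insert x S) (insert b Dm)"
      unfolding pinv_def
    proof (intro conjI ballI impI)
      show "insert x S \<inter> insert b Dm = {}" using inv1 move.hyps(1) bS pb(4) by blast
    next
      fix q a c assume q: "q \<in> P" "a \<in> q" "c \<in> q" "a \<noteq> c" "a \<in> insert x S"
      show "c \<in> insert b Dm"
      proof (cases "a = x")
        case True
        then have "q = p" using Pd[OF q(1) pb(1)] q(2) pb(2) by blast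
        then show ?thesis using q True pb p12 by auto
      next
        case False
        then show ?thesis using inv2[OF q(1,2,3,4)] q(5) by blast
      qed
    qed
    moreover have "pairing V E D P \<longrightarrow> pinv P (insert x S) (insert b Dm) \<longrightarrow> False"
      using move.IH bfree by blast
    ultimately show False using pr(1) by blast
  next
    case False
    note nobad = this
    have invx: "pinv P (insert x S) Dm"
      unfolding pinv_def
    proof (intro conjI ballI impI)
      show "insert x S \<inter> Dm = {}" using inv1 move.hyps(1) by blast
    next
      fix q a c assume q: "q \<in> P" "a \<in> q" "c \<in> q" "a \<noteq> c" "a \<in> insert x S"
      show "c \<in> Dm"
      proof (cases "a = x")
        case True
        have nb2: "\<forall>p\<in>P. x \<in> p \<longrightarrow> (\<forall>b\<in>p. b \<noteq> x \<longrightarrow> b \<in> Dm)"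
          using nobad by auto
        have "x \<in> q \<longrightarrow> (\<forall>b\<in>q. b \<noteq> x \<longrightarrow> b \<in> Dm)" using bspec[OF nb2 q(1)] .
        then show ?thesis using q(2,3,4) True by simp
      next
        case False
        then show ?thesis using inv2[OF q(1,2,3,4)] q(5) by blast
      qed
    qed
    show False
    proof (cases "V - (insert x S \<union> Dm) = {}")
      case True
      then obtain v where "v \<in> V - D" "closed_nbhd V E v \<subseteq> insert x S" using move.hyps(2) by blast
      then show False using not_won[OF pr(1) invx] by blast
    next
      case False
      then obtain y where y: "y \<in> V - (insert x S \<union> Dm)" by blast
      have "pinv P (insert x S) (insert y Dm)" using invx y unfolding pinv_def by blast
      moreover have "pairing V E D P \<longrightarrow> pinv P (insert x S) (insert y Dm) \<longrightarrow> False"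
        using move.IH y by blast
      ultimately show False using pr(1) by blast
    qed
  qed
  qed
qed

lemma pairing_dom: "pairing V E D P \<Longrightarrow> dominator_wins V E D"
  unfolding dominator_wins_def using dom_inv[of V E D "{}" "{}" P] unfolding pinv_def by blast



definition delE :: "'a set set \<Rightarrow> 'a set \<Rightarrow> 'a set set" where
  "delE E A = {e\<in>E. e \<inter> A = {}}"

definition hits :: "'a set \<Rightarrow> 'a set set \<Rightarrow> 'a set \<Rightarrow> bool" where
  "hits V E D \<longleftrightarrow> (\<forall>VF EF X. substructure V E VF EF X \<longrightarrow> X \<inter> D \<noteq> {})"

lemma nbs_graph: "graph V E \<Longrightarrow> u \<in> nbs E x \<Longrightarrow> u \<in> V \<and> x \<in> V \<and> u \<noteq> x"
  unfolding nbs_def using graph_edge by fastforce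

lemma deg_nbs:
  assumes G: "graph V E" shows "deg E x = card (nbs E x)"
proof -
  have "{e\<in>E. x \<in> e} = (\<lambda>u. {x, u}) ` nbs E x" using edges_at[OF G] .
  moreover have "inj_on (\<lambda>u. {x, u}) (nbs E x)"
  proof (rule inj_onI)
    fix u w assume "u \<in> nbs E x" "w \<in> nbs E x" "{x, u} = {x, w}"
    then show "u = w" using nbs_graph[OF G] by (auto simp: doubleton_eq_iff)
  qed
  ultimately show ?thesis unfolding deg_def by (simp add: card_image)
qed

lemma finite_nbs: "graph V E \<Longrightarrow> finite V \<Longrightarrow> finite (nbs E x)"
  using nbs_graph by (metis finite_subset subsetI)

lemma graph_del: "graph V E \<Longrightarrow> graph (V - A) (delE E A)"
  unfolding graph_def delE_def by blast

lemma delE_sub: "delE E A \<subseteq> E"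
  unfolding delE_def by blast

lemma nbs_del_sub: "nbs (delE E A) x \<subseteq> nbs E x"
  unfolding nbs_def delE_def by blast

lemma cn_del: "closed_nbhd (V - A) (delE E A) w \<subseteq> closed_nbhd V E w"
  unfolding closed_nbhd_def delE_def by blast

lemma nc_del: "\<not> has_cycle E \<Longrightarrow> \<not> has_cycle (delE E A)"
  using has_cycle_mono delE_sub by blast

lemma lift_sub:
  assumes "substructure (V - A) (delE E A) VF EF X" "\<forall>x\<in>X. deg E x = deg (delE E A) x"
  shows "substructure V E VF EF X"
proof -
  have h: "is_subdivision VF EF X" "VF \<subseteq> V - A" "EF \<subseteq> delE E A" "\<forall>v\<in>X. deg (delE E A) v = deg EF v"
    using assms(1) unfolding substructure_def by auto
  have "EF \<subseteq> E" using h(3) delE_sub[of E A] by blast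
  moreover have "\<forall>v\<in>X. deg E v = deg EF v" using h(4) assms(2) by simp
  ultimately show ?thesis using h(1,2) unfolding substructure_def by blast
qed

lemma sub_facts:
  assumes "substructure V E VF EF X"
  obtains Et s where "tree X Et" "inj_on s Et" "s ` Et \<inter> X = {}" "VF = X \<union> s ` Et"
    "EF = {{x, s e} |x e. e \<in> Et \<and> x \<in> e}" "VF \<subseteq> V" "EF \<subseteq> E"
    "\<forall>v\<in>X. deg E v = deg EF v"
    "\<forall>x\<in>X. nbs EF x = s ` {e\<in>Et. x \<in> e}"
proof -
  from assms obtain Et s where st: "tree X Et" "inj_on s Et" "s ` Et \<inter> X = {}" "VF = X \<union> s ` Et"
    "EF = {{x, s e} |x e. e \<in> Et \<and> x \<in> e}" and r: "VF \<subseteq> V" "EF \<subseteq> E"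
    "\<forall>v\<in>X. deg E v = deg EF v"
    unfolding substructure_def is_subdivision_def by blast
  have "nbs EF x = s ` {e\<in>Et. x \<in> e}" if x: "x \<in> X" for x
  proof (intro set_eqI iffI)
    fix u assume "u \<in> nbs EF x"
    then have "{u, x} \<in> EF" unfolding nbs_def by simp
    then obtain x' f where f: "{u, x} = {x', s f}" "f \<in> Et" "x' \<in> f" using st(5) by blast
    have "s f \<noteq> x" using st(3) f(2) x by blast
    then have "x = x'" "u = s f" using f(1) by (auto simp: doubleton_eq_iff)
    then show "u \<in> s ` {e\<in>Et. x \<in> e}" using f by blast
  next
    fix u assume "u \<in> s ` {e\<in>Et. x \<in> e}"
    then obtain f where f: "u = s f" "f \<in> Et" "x \<in> f" by blast
    then have "{x, s f} \<in> EF" using st(5) by blast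
    then show "u \<in> nbs EF x" unfolding nbs_def using f by (simp add: insert_commute)
  qed
  then show ?thesis using that st r by blast
qed

lemma nbs_del:
  assumes G: "graph V E" and l: "nbs E l = {p}" and x: "x \<noteq> l" "x \<noteq> p"
  shows "nbs E x = nbs (delE E {l, p}) x \<union> (if {x, p} \<in> E then {p} else {})"
proof (intro set_eqI iffI)
  fix u assume u: "u \<in> nbs E x"
  then have ux: "{u, x} \<in> E" unfolding nbs_def by simp
  show "u \<in> nbs (delE E {l, p}) x \<union> (if {x, p} \<in> E then {p} else {})"
  proof (cases "u = l")
    case True
    then have "x \<in> nbs E l" using ux unfolding nbs_def by (simp add: insert_commute)
    then show ?thesis using l x by simp
  next
    case False
    show ?thesis
    proof (cases "u = p")
      case True
      then show ?thesis using ux by (simp add: insert_commute)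
    next
      case False
      then have "{u, x} \<in> delE E {l, p}" using ux x \<open>u \<noteq> l\<close> unfolding delE_def by auto
      then show ?thesis unfolding nbs_def by simp
    qed
  qed
next
  fix u assume "u \<in> nbs (delE E {l, p}) x \<union> (if {x, p} \<in> E then {p} else {})"
  then show "u \<in> nbs E x" using nbs_del_sub[of E "{l,p}" x]
    by (auto simp: nbs_def insert_commute split: if_splits)
qed

lemma p_notin_del: "p \<notin> nbs (delE E {l, p}) x"
  unfolding nbs_def delE_def by auto

lemma sub_conn:
  assumes "substructure V E VF EF X" "q1 \<in> X" "q2 \<in> X"
  shows "(\<lambda>x y. {x, y} \<in> E)\<^sup>*\<^sup>* q1 q2"
proof -
  obtain Et s where st0: "tree X Et" "inj_on s Et" "s ` Et \<inter> X = {}" "VF = X \<union> s ` Et"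
    "EF = {{x, s e} |x e. e \<in> Et \<and> x \<in> e}" "VF \<subseteq> V" "EF \<subseteq> E"
    "\<forall>v\<in>X. deg E v = deg EF v"
    "\<forall>x\<in>X. nbs EF x = s ` {e\<in>Et. x \<in> e}"
    by (rule sub_facts[OF assms(1)])
  note st = st0(1) st0(5) st0(7)
  have "(\<lambda>x y. {x, y} \<in> Et)\<^sup>*\<^sup>* q1 q2"
    using st(1) assms(2,3) unfolding tree_def connected_graph_def by blast
  then show ?thesis
  proof (induction rule: rtranclp_induct)
    case base then show ?case by simp
  next
    case (step y z)
    have "{y, s {y, z}} \<in> EF" "{z, s {y, z}} \<in> EF" using st(2) step(2) by blast+
    then have "{y, s {y, z}} \<in> E" "{s {y, z}, z} \<in> E" using st(3) by (auto simp: insert_commute)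
    then show ?case using step(3)
      by (meson rtranclp.rtrancl_into_rtrancl)
  qed
qed

lemma sub_graph:
  assumes "substructure V E VF EF X"
  shows "graph VF EF"
proof -
  obtain Et s where st0: "tree X Et" "inj_on s Et" "s ` Et \<inter> X = {}" "VF = X \<union> s ` Et"
    "EF = {{x, s e} |x e. e \<in> Et \<and> x \<in> e}" "VF \<subseteq> V" "EF \<subseteq> E"
    "\<forall>v\<in>X. deg E v = deg EF v"
    "\<forall>x\<in>X. nbs EF x = s ` {e\<in>Et. x \<in> e}"
    by (rule sub_facts[OF assms(1)])
  note st = st0(1) st0(3) st0(4) st0(5)
  have GX: "graph X Et" using st(1) unfolding tree_def by simp
  show ?thesis unfolding graph_def
  proof
    fix f assume "f \<in> EF"
    then obtain x e where f: "f = {x, s e}" "e \<in> Et" "x \<in> e" using st(4) by blast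
    have "x \<in> X" using GX f unfolding graph_def by blast
    moreover have "s e \<notin> X" using st(2) f(2) by blast
    ultimately have "x \<noteq> s e" by blast
    then have "card f = 2" using f(1) by simp
    moreover have "f \<subseteq> VF" using f st(3) \<open>x \<in> X\<close> by blast
    ultimately show "card f = 2 \<and> f \<subseteq> VF" by blast
  qed
qed

lemma sub_X_sub: "substructure V E VF EF X \<Longrightarrow> X \<subseteq> V"
  unfolding substructure_def is_subdivision_def by blast

lemma Q_single:
  assumes G: "graph V E" and nc: "\<not> has_cycle E" and h: "hits V E D" and l: "nbs E l = {p}"
    and sub: "substructure (V - {l, p}) (delE E {l, p}) VF EF X" and XD: "X \<inter> D = {}"
  shows "\<exists>q. {x\<in>X. {x, p} \<in> E} = {q}"
proof -
  define E' where "E' = delE E {l, p}"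
  have XV: "X \<subseteq> V - {l, p}" using sub_X_sub[OF sub] .
  have G': "graph (V - {l, p}) E'" unfolding E'_def using graph_del[OF G] .
  have ne: "{x\<in>X. {x, p} \<in> E} \<noteq> {}"
  proof
    assume Q: "{x\<in>X. {x, p} \<in> E} = {}"
    have "\<forall>x\<in>X. deg E x = deg E' x"
    proof
      fix x assume x: "x \<in> X"
      then have "nbs E x = nbs E' x" using nbs_del[OF G l, of x] XV Q unfolding E'_def by auto
      then show "deg E x = deg E' x" using deg_nbs[OF G] deg_nbs[OF G'] by simp
    qed
    then have "substructure V E VF EF X" using lift_sub sub unfolding E'_def by blast
    then show False using h XD unfolding hits_def by blast
  qed
  have uniq: "q1 = q2" if q: "q1 \<in> X" "{q1, p} \<in> E" "q2 \<in> X" "{q2, p} \<in> E" for q1 q2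
  proof (rule ccontr)
    assume "q1 \<noteq> q2"
    moreover have "(\<lambda>x y. {x, y} \<in> E')\<^sup>*\<^sup>* q1 q2" using sub_conn[OF sub q(1) q(3)] unfolding E'_def .
    moreover have "\<forall>e\<in>E'. p \<notin> e" unfolding E'_def delE_def by blast
    ultimately show False using cycle_through[OF nc _ _ _ _ q(2) q(4)] delE_sub unfolding E'_def by blast
  qed
  from ne obtain q where "q \<in> {x\<in>X. {x, p} \<in> E}" by blast
  then have "{x\<in>X. {x, p} \<in> E} = {q}" using uniq by blast
  then show ?thesis by blast
qed

lemma leaf_no_cycle:
  assumes hc: "has_cycle (insert {g, l} Et)" and nl: "\<forall>e\<in>Et. l \<notin> e" and lg: "l \<noteq> g"
  shows "has_cycle Et"
proof -
  obtain cs where cs: "length cs \<ge> 3" "distinct cs"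
    "\<forall>i<length cs. {cs!i, cs!((i+1) mod length cs)} \<in> insert {g, l} Et"
    using hc unfolding has_cycle_def by blast
  define n where "n = length cs"
  have n3: "n \<ge> 3" using cs(1) n_def by simp
  have jeq: "(i + 1) mod n = (if i + 1 < n then i + 1 else 0)" if "i < n" for i
  proof (cases "i + 1 < n")
    case True then show ?thesis by simp
  next
    case False then have "i + 1 = n" using that by linarith
    then show ?thesis by simp
  qed
  show ?thesis
  proof (cases "l \<in> set cs")
    case False
    have "\<forall>i<n. {cs!i, cs!((i+1) mod n)} \<in> Et"
    proof (intro allI impI)
      fix i assume i: "i < n"
      have m: "(i+1) mod n < n" using n3 by simp
      have e: "{cs!i, cs!((i+1) mod n)} \<in> insert {g, l} Et" using cs(3) i n_def by simp
      have "cs!i \<noteq> l" "cs!((i+1) mod n) \<noteq> l" using False i m n_def nth_mem by metis+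
      then have "{cs!i, cs!((i+1) mod n)} \<noteq> {g, l}" by (auto simp: doubleton_eq_iff)
      then show "{cs!i, cs!((i+1) mod n)} \<in> Et" using e by blast
    qed
    then show ?thesis unfolding has_cycle_def using cs(1,2) n_def by blast
  next
    case True
    then obtain i where i: "i < n" "cs!i = l" by (metis in_set_conv_nth n_def)
    define j where "j = (i+1) mod n"
    define k where "k = (if i = 0 then n - 1 else i - 1)"
    have jn: "j < n" unfolding j_def using n3 by simp
    have kn: "k < n" unfolding k_def using i by auto
    have k1: "(k+1) mod n = i"
    proof (cases "i = 0")
      case True then have "k + 1 = n" unfolding k_def using n3 by simp
      then show ?thesis using True by simp
    next
      case False then have "k + 1 = i" unfolding k_def by simp
      then show ?thesis using i by simp
    qed
    have jv: "j = (if i + 1 < n then i + 1 else 0)" unfolding j_def using jeq[OF i(1)] .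
    have ji: "j \<noteq> i" using jv n3 by auto
    have ki: "k \<noteq> i" unfolding k_def using n3 by auto
    have jk: "j \<noteq> k" using jv n3 i(1) unfolding k_def by auto
    have e1: "{cs!i, cs!j} \<in> insert {g, l} Et" using cs(3) i(1) n_def j_def by simp
    have e2: "{cs!k, cs!i} \<in> insert {g, l} Et" using cs(3) kn n_def k1 by metis
    have "{cs!i, cs!j} \<notin> Et" using nl i(2) by auto
    then have "{l, cs!j} = {g, l}" using e1 i(2) by simp
    moreover have "cs!j \<noteq> l" using cs(2) ji jn i n_def by (metis nth_eq_iff_index_eq)
    ultimately have cj: "cs!j = g" by (auto simp: doubleton_eq_iff)
    have "{cs!k, cs!i} \<notin> Et" using nl i(2) by auto
    then have "{cs!k, l} = {g, l}" using e2 i(2) by simp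
    moreover have "cs!k \<noteq> l" using cs(2) ki kn i n_def by (metis nth_eq_iff_index_eq)
    ultimately have ck: "cs!k = g" by (auto simp: doubleton_eq_iff)
    have "j = k" using cj ck cs(2) jn kn n_def by (metis nth_eq_iff_index_eq)
    then show ?thesis using jk by simp
  qed
qed

lemma extend_contra:
  assumes G: "graph V E" and fin: "finite V" and h: "hits V E D" and l: "nbs E l = {p}" and lD: "l \<notin> D"
    and sub: "substructure (V - {l, p}) (delE E {l, p}) VF EF X" and XD: "X \<inter> D = {}"
    and Q: "{x\<in>X. {x, p} \<in> E} = {g}"
  shows False
proof -
  define E' where "E' = delE E {l, p}"
  obtain Et s where st: "tree X Et" "inj_on s Et" "s ` Et \<inter> X = {}" "VF = X \<union> s ` Et"
    "EF = {{x, s e} |x e. e \<in> Et \<and> x \<in> e}" "VF \<subseteq> V - {l, p}" "EF \<subseteq> E'"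
    "\<forall>v\<in>X. deg E' v = deg EF v"
    "\<forall>x\<in>X. nbs EF x = s ` {e\<in>Et. x \<in> e}"
    unfolding E'_def by (rule sub_facts[OF sub])
  have GF: "graph VF EF" using sub_graph[OF sub] .
  have G': "graph (V - {l, p}) E'" unfolding E'_def using graph_del[OF G] .
  have lpE: "{l, p} \<in> E" using l unfolding nbs_def by (auto simp: insert_commute)
  have lp: "l \<noteq> p" "l \<in> V" "p \<in> V" using graph_edge[OF G lpE] by auto
  have gX: "g \<in> X" "{g, p} \<in> E" using Q by auto
  have lVF: "l \<notin> VF" "p \<notin> VF" using st(6) by auto
  have XVF: "X \<subseteq> VF" "s ` Et \<subseteq> VF" using st(4) by auto
  have GX: "graph X Et" using st(1) unfolding tree_def by simp
  have gl: "g \<noteq> l" "g \<noteq> p" using gX XVF lVF by auto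
  have lX: "l \<notin> X" using XVF lVF by auto
  have Etl: "\<forall>e\<in>Et. l \<notin> e" using GX lX unfolding graph_def by blast
  have glEt: "{g, l} \<notin> Et" using Etl by blast
  define Et' where "Et' = insert {g, l} Et"
  define s' where "s' = s({g, l} := p)"
  define X' where "X' = insert l X"
  define VF' where "VF' = VF \<union> {l, p}"
  define EF' where "EF' = insert {g, p} (insert {l, p} EF)"
  have s'Et: "\<forall>e\<in>Et. s' e = s e" unfolding s'_def using glEt by auto
  have s'n: "s' {g, l} = p" unfolding s'_def by simp
  have s'img: "s' ` Et' = insert p (s ` Et)" unfolding Et'_def using s'Et s'n by auto
  have GX': "graph X' Et'" unfolding graph_def Et'_def X'_def
  proof
    fix e assume "e \<in> insert {g, l} Et"
    then show "card e = 2 \<and> e \<subseteq> insert l X"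
    proof
      assume "e = {g, l}" then show ?thesis using gl gX by auto
    next
      assume "e \<in> Et" then show ?thesis using GX unfolding graph_def by blast
    qed
  qed
  have finX: "finite X" "X \<noteq> {}" using st(1) unfolding tree_def by auto
  have conn: "connected_graph X' Et'" unfolding connected_graph_def
  proof (intro ballI)
    fix u w assume uw: "u \<in> X'" "w \<in> X'"
    let ?R = "\<lambda>x y. {x, y} \<in> Et" and ?R' = "\<lambda>x y. {x, y} \<in> Et'"
    have mono: "?R'\<^sup>*\<^sup>* a b" if "?R\<^sup>*\<^sup>* a b" for a b
      using that by (rule rtranclp_mono[THEN predicate2D, rotated]) (auto simp: Et'_def)
    have RX: "?R\<^sup>*\<^sup>* a b" if "a \<in> X" "b \<in> X" for a b
      using st(1) that unfolding tree_def connected_graph_def by blast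
    have lg: "?R' l g" "?R' g l" unfolding Et'_def by (auto simp: insert_commute)
    show "?R'\<^sup>*\<^sup>* u w"
    proof (cases "u = l")
      case True
      show ?thesis
      proof (cases "w = l")
        case True then show ?thesis using \<open>u = l\<close> by simp
      next
        case False
        then have "w \<in> X" using uw X'_def by auto
        then have "?R'\<^sup>*\<^sup>* g w" using mono RX gX(1) by blast
        then show ?thesis using lg \<open>u = l\<close> by (meson converse_rtranclp_into_rtranclp)
      qed
    next
      case False
      then have uX: "u \<in> X" using uw X'_def by auto
      show ?thesis
      proof (cases "w = l")
        case True
        have "?R'\<^sup>*\<^sup>* u g" using mono RX gX(1) uX by blast
        then show ?thesis using lg True by (meson rtranclp.rtrancl_into_rtrancl)
      next
        case False
        then have "w \<in> X" using uw X'_def by auto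
        then show ?thesis using mono RX uX by blast
      qed
    qed
  qed
  have nc': "\<not> has_cycle Et'"
  proof
    assume "has_cycle Et'"
    then have "has_cycle Et" using leaf_no_cycle[OF _ Etl gl(1)[symmetric]] unfolding Et'_def by blast
    then show False using st(1) unfolding tree_def by blast
  qed
  have tree': "tree X' Et'" unfolding tree_def using GX' finX conn nc' X'_def by auto
  have inj': "inj_on s' Et'" unfolding Et'_def
  proof (rule inj_on_insert[THEN iffD2], rule conjI)
    show "inj_on s' Et" using st(2) s'Et by (metis inj_on_cong)
    show "s' {g, l} \<notin> s' ` (Et - {{g, l}})" using s'n s'Et XVF lVF by auto
  qed
  have dj': "s' ` Et' \<inter> X' = {}" unfolding s'img X'_def using st(3) XVF lVF lp(1) by auto
  have VF'eq: "VF' = X' \<union> s' ` Et'" unfolding s'img X'_def VF'_def st(4) by auto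
  have EF'eq: "EF' = {{x, s' e} |x e. e \<in> Et' \<and> x \<in> e}"
  proof (intro set_eqI iffI)
    fix f assume "f \<in> EF'"
    then consider "f = {g, p}" | "f = {l, p}" | "f \<in> EF" unfolding EF'_def by blast
    then show "f \<in> {{x, s' e} |x e. e \<in> Et' \<and> x \<in> e}"
    proof cases
      case 1 then show ?thesis using s'n unfolding Et'_def by blast
    next
      case 2 then show ?thesis using s'n unfolding Et'_def by blast
    next
      case 3
      then obtain x e where "f = {x, s e}" "e \<in> Et" "x \<in> e" using st(5) by blast
      then show ?thesis using s'Et unfolding Et'_def by force
    qed
  next
    fix f assume "f \<in> {{x, s' e} |x e. e \<in> Et' \<and> x \<in> e}"
    then obtain x e where f: "f = {x, s' e}" "e \<in> Et'" "x \<in> e" by blast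
    show "f \<in> EF'"
    proof (cases "e = {g, l}")
      case True then show ?thesis using f s'n unfolding EF'_def by auto
    next
      case False
      then have "e \<in> Et" using f(2) unfolding Et'_def by blast
      then show ?thesis using f s'Et st(5) unfolding EF'_def by auto
    qed
  qed
  have VF'V: "VF' \<subseteq> V" using st(6) lp unfolding VF'_def by auto
  have EF'E: "EF' \<subseteq> E" using st(7) delE_sub[of E "{l,p}"] lpE gX(2) unfolding EF'_def E'_def by blast
  have GF': "graph VF' EF'" unfolding graph_def EF'_def
  proof
    fix f assume "f \<in> insert {g, p} (insert {l, p} EF)"
    then consider "f = {g, p}" | "f = {l, p}" | "f \<in> EF" by blast
    then show "card f = 2 \<and> f \<subseteq> VF'"
    proof cases
      case 1 then show ?thesis using gl gX XVF unfolding VF'_def by auto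
    next
      case 2 then show ?thesis using lp unfolding VF'_def by auto
    next
      case 3 then show ?thesis using GF unfolding graph_def VF'_def by blast
    qed
  qed
  have EFVF: "\<forall>f\<in>EF. f \<subseteq> VF" using GF unfolding graph_def by blast
  have finVF: "finite VF" using VF'V fin VF'_def finite_subset by blast
  have degs: "deg E x = deg EF' x" if x: "x \<in> X'" for x
  proof -
    have "card (nbs E x) = card (nbs EF' x)"
    proof (cases "x = l")
      case True
      have "nbs EF' l = {p}"
        unfolding nbs_def EF'_def using EFVF lVF gl lp(1) by (auto simp: doubleton_eq_iff)
      then show ?thesis using True l by simp
    next
      case False
      then have xX: "x \<in> X" using x X'_def by auto
      have xl: "x \<noteq> l" "x \<noteq> p" using xX XVF lVF by auto
      have ce: "card (nbs E' x) = card (nbs EF x)"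
        using st(8) xX deg_nbs[OF G'] deg_nbs[OF GF] by simp
      show ?thesis
      proof (cases "x = g")
        case True
        have a: "nbs EF' g = insert p (nbs EF g)"
          unfolding nbs_def EF'_def using gl by (auto simp: doubleton_eq_iff insert_commute)
        have b: "nbs E g = insert p (nbs E' g)"
          using nbs_del[OF G l gl(1) gl(2)] gX(2) unfolding E'_def by auto
        have f1: "finite (nbs E' g)" using finite_nbs[OF G' finite_Diff[OF fin]] .
        have f2: "finite (nbs EF g)" using finite_nbs[OF GF finVF] .
        have p1: "p \<notin> nbs E' g" unfolding E'_def by (rule p_notin_del)
        have p2: "p \<notin> nbs EF g" using nbs_graph[OF GF] lVF by blast
        show ?thesis using a b f1 f2 p1 p2 ce True by simp
      next
        case False
        have "{x, p} \<notin> E" using Q xX False by blast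
        then have b: "nbs E x = nbs E' x" using nbs_del[OF G l xl] unfolding E'_def by simp
        have a: "nbs EF' x = nbs EF x"
          unfolding nbs_def EF'_def using xl False by (auto simp: doubleton_eq_iff)
        show ?thesis using a b ce by simp
      qed
    qed
    then show ?thesis using deg_nbs[OF G] deg_nbs[OF GF'] by simp
  qed
  have "substructure V E VF' EF' X'"
    unfolding substructure_def is_subdivision_def
    using tree' inj' dj' VF'eq EF'eq VF'V EF'E degs by blast
  moreover have "X' \<inter> D = {}" using XD lD X'_def by auto
  ultimately show False using h unfolding hits_def by blast
qed

lemma leaf_contra:
  assumes G: "graph V E" and fin: "finite V" and l: "nbs E c = {p}"
    and sub: "substructure (V - {c, p}) (delE E {c, p}) VF EF X" and XD: "X \<inter> D = {}"
    and leaves: "\<forall>v\<in>V. \<forall>u. nbs E v = {u} \<longrightarrow> v \<in> D"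
    and Q: "{x\<in>X. {x, p} \<in> E} = {q}"
  shows False
proof -
  define E' where "E' = delE E {c, p}"
  obtain Et s where st: "tree X Et" "inj_on s Et" "s ` Et \<inter> X = {}" "VF = X \<union> s ` Et"
    "EF = {{x, s e} |x e. e \<in> Et \<and> x \<in> e}" "VF \<subseteq> V - {c, p}" "EF \<subseteq> E'"
    "\<forall>v\<in>X. deg E' v = deg EF v"
    "\<forall>x\<in>X. nbs EF x = s ` {e\<in>Et. x \<in> e}"
    unfolding E'_def by (rule sub_facts[OF sub])
  have GF: "graph VF EF" using sub_graph[OF sub] .
  have G': "graph (V - {c, p}) E'" unfolding E'_def using graph_del[OF G] .
  have GX: "graph X Et" using st(1) unfolding tree_def by simp
  have finX: "finite X" using st(1) unfolding tree_def by simp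
  have ncX: "\<not> has_cycle Et" using st(1) unfolding tree_def by simp
  have XV: "X \<subseteq> V - {c, p}" using st(4,6) by auto
  have qX: "q \<in> X" "{q, p} \<in> E" using Q by auto
  have key: False if z: "z \<in> X" "z \<noteq> q" "card (nbs EF z) = 1" for z
  proof -
    have zl: "z \<noteq> c" "z \<noteq> p" using z XV by auto
    have "{z, p} \<notin> E" using Q z by blast
    then have b: "nbs E z = nbs E' z" using nbs_del[OF G l zl] unfolding E'_def by simp
    have "card (nbs E' z) = card (nbs EF z)"
      using st(8) z(1) deg_nbs[OF G'] deg_nbs[OF GF] by simp
    then have "card (nbs E z) = 1" using b z(3) by simp
    then have "\<exists>u. nbs E z = {u}" by (simp add: card_1_singleton_iff)
    then obtain u where "nbs E z = {u}" by blast
    then have "z \<in> D" using leaves z(1) XV by blast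
    then show False using XD z(1) by blast
  qed
  show False
  proof (cases "X = {q}")
    case True
    have "Et = {}"
    proof (rule ccontr)
      assume "Et \<noteq> {}"
      then obtain e where e: "e \<in> Et" by blast
      then have "card e = 2" "e \<subseteq> {q}" using GX True unfolding graph_def by auto
      then show False using card_mono[of "{q}" e] by simp
    qed
    then have "nbs EF q = {}" using st(9) qX by simp
    then have "card (nbs E' q) = 0"
      using st(8) qX deg_nbs[OF G'] deg_nbs[OF GF] by simp
    then have "nbs E' q = {}" using finite_nbs[OF G' finite_Diff[OF fin]] by simp
    moreover have "q \<noteq> c" "q \<noteq> p" using qX XV by auto
    ultimately have "nbs E q = {p}" using nbs_del[OF G l] qX(2) unfolding E'_def by simp
    then have "q \<in> D" using leaves qX XV by blast
    then show False using XD qX by blast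
  next
    case False
    then obtain z where z: "z \<in> X" "z \<noteq> q" using qX by blast
    have "(\<lambda>x y. {x, y} \<in> Et)\<^sup>*\<^sup>* q z"
      using st(1) z(1) qX(1) unfolding tree_def connected_graph_def by blast
    then obtain y where "{y, z} \<in> Et"
      using z(2) by (metis (no_types, lifting) rtranclp.cases)
    from two_leaves[OF GX finX ncX this] obtain x1 x2 u1 u2 where
      xs: "x1 \<noteq> x2" "nbs Et x1 = {u1}" "nbs Et x2 = {u2}" by blast
    obtain w u where w: "w \<noteq> q" "nbs Et w = {u}" using xs by metis
    have wX: "w \<in> X" using nbs_graph[OF GX, of u w] w by simp
    have "{e\<in>Et. w \<in> e} = {{w, u}}" using edges_at[OF GX, of w] w by simp
    then have "nbs EF w = {s {w, u}}" using st(9) wX by simp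
    then show False using key[OF wX w(1)] by simp
  qed
qed

lemma pair_step:
  assumes G: "graph V E" and e: "{l, p} \<in> E" and P': "pairing (V - {l, p}) (delE E {l, p}) D P'"
  shows "pairing V E D (insert {l, p} P')"
proof -
  have lp: "l \<noteq> p" "l \<in> V" "p \<in> V" using graph_edge[OF G e] by auto
  have sub: "q \<subseteq> V - {l, p}" if "q \<in> P'" for q using pairingD1[OF P' that] by blast
  have c1: "\<forall>q\<in>insert {l, p} P'. \<exists>a b. q = {a, b} \<and> a \<noteq> b \<and> a \<in> V \<and> b \<in> V"
  proof
    fix q assume "q \<in> insert {l, p} P'"
    then show "\<exists>a b. q = {a, b} \<and> a \<noteq> b \<and> a \<in> V \<and> b \<in> V"
    proof
      assume "q = {l, p}" then show ?thesis using lp by blast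
    next
      assume "q \<in> P'" then show ?thesis using pairingD1[OF P'] by blast
    qed
  qed
  have c2: "\<forall>q1\<in>insert {l, p} P'. \<forall>q2\<in>insert {l, p} P'. q1 \<noteq> q2 \<longrightarrow> q1 \<inter> q2 = {}"
  proof (intro ballI impI)
    fix q1 q2 assume q: "q1 \<in> insert {l, p} P'" "q2 \<in> insert {l, p} P'" "q1 \<noteq> q2"
    show "q1 \<inter> q2 = {}"
    proof (cases "q1 = {l, p}")
      case True
      then have "q2 \<in> P'" using q by auto
      then show ?thesis using sub True by blast
    next
      case False
      then have q1P: "q1 \<in> P'" using q by auto
      show ?thesis
      proof (cases "q2 = {l, p}")
        case True then show ?thesis using sub[OF q1P] by blast
      next
        case False
        then have "q2 \<in> P'" using q by auto
        then show ?thesis using pairingD2[OF P' q1P _ q(3)] by blast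
      qed
    qed
  qed
  have c3: "\<forall>w\<in>V - D. \<exists>q\<in>insert {l, p} P'. q \<subseteq> closed_nbhd V E w"
  proof
    fix w assume w: "w \<in> V - D"
    show "\<exists>q\<in>insert {l, p} P'. q \<subseteq> closed_nbhd V E w"
    proof (cases "w \<in> {l, p}")
      case True
      have "{l, p} \<subseteq> closed_nbhd V E w"
        using True lp e unfolding closed_nbhd_def by (auto simp: insert_commute)
      then show ?thesis by blast
    next
      case False
      then have "w \<in> (V - {l, p}) - D" using w by blast
      then obtain q where "q \<in> P'" "q \<subseteq> closed_nbhd (V - {l, p}) (delE E {l, p}) w"
        using pairingD3[OF P'] by blast
      then show ?thesis using cn_del[of V "{l, p}" E w] by blast
    qed
  qed
  show ?thesis unfolding pairing_def using c1 c2 c3 by blast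
qed

lemma pairing_lift:
  assumes P: "pairing (V - {c}) (delE E {c}) D P" and cD: "c \<in> D"
  shows "pairing V E D P"
proof -
  have c1: "\<forall>q\<in>P. \<exists>a b. q = {a, b} \<and> a \<noteq> b \<and> a \<in> V \<and> b \<in> V"
    using pairingD1[OF P] by blast
  have c2: "\<forall>q1\<in>P. \<forall>q2\<in>P. q1 \<noteq> q2 \<longrightarrow> q1 \<inter> q2 = {}" using pairingD2[OF P] by blast
  have c3: "\<forall>w\<in>V - D. \<exists>q\<in>P. q \<subseteq> closed_nbhd V E w"
  proof
    fix w assume "w \<in> V - D"
    then have "w \<in> (V - {c}) - D" using cD by blast
    then obtain q where "q \<in> P" "q \<subseteq> closed_nbhd (V - {c}) (delE E {c}) w"
      using pairingD3[OF P] by blast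
    then show "\<exists>q\<in>P. q \<subseteq> closed_nbhd V E w" using cn_del[of V "{c}" E w] by blast
  qed
  show ?thesis unfolding pairing_def using c1 c2 c3 by blast
qed

lemma nbs_del1: "c \<notin> nbs E x \<Longrightarrow> nbs E x = nbs (delE E {c}) x \<or> x = c"
  unfolding nbs_def delE_def by auto

lemma remove_one:
  assumes G: "graph V E" and h: "hits V E D"
    and nb: "\<forall>x\<in>V - {c}. x \<notin> D \<longrightarrow> c \<notin> nbs E x"
  shows "hits (V - {c}) (delE E {c}) D"
  unfolding hits_def
proof (intro allI impI)
  fix VF EF X assume sub: "substructure (V - {c}) (delE E {c}) VF EF X"
  show "X \<inter> D \<noteq> {}"
  proof
    assume XD: "X \<inter> D = {}"
    have XV: "X \<subseteq> V - {c}" using sub_X_sub[OF sub] .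
    have G': "graph (V - {c}) (delE E {c})" using graph_del[OF G] .
    have "\<forall>x\<in>X. deg E x = deg (delE E {c}) x"
    proof
      fix x assume x: "x \<in> X"
      then have "c \<notin> nbs E x" using nb XV XD by blast
      then have "nbs E x = nbs (delE E {c}) x" using nbs_del1[of c E x] x XV by blast
      then show "deg E x = deg (delE E {c}) x" using deg_nbs[OF G] deg_nbs[OF G'] by simp
    qed
    then have "substructure V E VF EF X" using lift_sub sub by blast
    then show False using h XD unfolding hits_def by blast
  qed
qed

lemma single_sub:
  assumes G: "graph V E" and v: "v \<in> V" and nv: "nbs E v = {}"
  shows "substructure V E {v} {} {v}"
proof -
  have nc0: "\<not> has_cycle ({} :: 'a set set)"
  proof
    assume "has_cycle ({} :: 'a set set)"
    then obtain cs :: "'a list" where cs: "3 \<le> length cs"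
      "\<forall>i<length cs. {cs ! i, cs ! ((i + 1) mod length cs)} \<in> {}"
      unfolding has_cycle_def by blast
    have "0 < length cs" using cs(1) by linarith
    then show False using cs(2) by (metis empty_iff)
  qed
  have t: "tree {v} {}" unfolding tree_def graph_def connected_graph_def using nc0 by auto
  have e0: "{e\<in>E. v \<in> e} = {}" using edges_at[OF G, of v] nv by simp
  have "deg E v = 0" unfolding deg_def e0 by simp
  moreover have "deg {} v = 0" unfolding deg_def by simp
  ultimately have d: "deg E v = deg {} v" by simp
  have "is_subdivision {v} {} {v}" unfolding is_subdivision_def
    by (rule exI[of _ "{}"], rule exI[of _ "\<lambda>_. v"]) (use t in auto)
  then show ?thesis unfolding substructure_def using v d by auto
qed

lemma hits_pair:
  assumes G: "graph V E" and nc: "\<not> has_cycle E" and h: "hits V E D" and l: "nbs E l = {p}"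
    and contra: "\<And>VF EF X q. substructure (V - {l, p}) (delE E {l, p}) VF EF X \<Longrightarrow> X \<inter> D = {} \<Longrightarrow>
       {x\<in>X. {x, p} \<in> E} = {q} \<Longrightarrow> False"
  shows "hits (V - {l, p}) (delE E {l, p}) D"
  unfolding hits_def
proof (intro allI impI notI)
  fix VF EF X assume sub: "substructure (V - {l, p}) (delE E {l, p}) VF EF X" and XD: "X \<inter> D = {}"
  obtain q where "{x\<in>X. {x, p} \<in> E} = {q}" using Q_single[OF G nc h l sub XD] by blast
  then show False using contra[OF sub XD] by blast
qed

lemma pairing_exists:
  "finite V \<Longrightarrow> graph V E \<Longrightarrow> \<not> has_cycle E \<Longrightarrow> hits V E D \<Longrightarrow> \<exists>P. pairing V E D P"
proof (induction "card V" arbitrary: V E rule: less_induct)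
  case less
  note fin = less.prems(1) and G = less.prems(2) and nc = less.prems(3) and h = less.prems(4)
  show ?case
  proof (cases "V = {}")
    case True
    then show ?thesis unfolding pairing_def by blast
  next
    case False
    then obtain v0 where v0: "v0 \<in> V" by blast
    have cardl: "card (V - A) < card V" if "a \<in> A" "a \<in> V" for A a
      by (rule psubset_card_mono[OF fin]) (use that in blast)
    consider (iso) v where "v \<in> V" "nbs E v = {}"
      | (leafnd) l p where "l \<in> V" "nbs E l = {p}" "l \<notin> D"
      | (rest) "\<forall>v\<in>V. nbs E v \<noteq> {}" "\<forall>l\<in>V. \<forall>p. nbs E l = {p} \<longrightarrow> l \<in> D"
      by blast
    then show ?thesis
    proof cases
      case iso
      show ?thesis
      proof (cases "v \<in> D")
        case False
        have "substructure V E {v} {} {v}" using single_sub[OF G iso] .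
        then show ?thesis using h False unfolding hits_def by blast
      next
        case True
        have "\<forall>x\<in>V - {v}. x \<notin> D \<longrightarrow> v \<notin> nbs E x"
        proof (intro ballI impI notI)
          fix x assume "v \<in> nbs E x"
          then have "x \<in> nbs E v" unfolding nbs_def by (simp add: insert_commute)
          then show False using iso(2) by simp
        qed
        then have h': "hits (V - {v}) (delE E {v}) D" by (rule remove_one[OF G h])
        obtain P where "pairing (V - {v}) (delE E {v}) D P"
          using less.hyps[OF cardl[of v "{v}"] _ graph_del[OF G] nc_del[OF nc] h'] iso(1) fin by blast
        then show ?thesis using pairing_lift[OF _ True] by blast
      qed
    next
      case leafnd
      have h': "hits (V - {l, p}) (delE E {l, p}) D"
        by (rule hits_pair[OF G nc h leafnd(2)], rule extend_contra[OF G fin h leafnd(2) leafnd(3)])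
      obtain P where "pairing (V - {l, p}) (delE E {l, p}) D P"
        using less.hyps[OF cardl[of l "{l, p}"] _ graph_del[OF G] nc_del[OF nc] h'] leafnd(1) fin by blast
      moreover have "{l, p} \<in> E" using leafnd(2) unfolding nbs_def by (auto simp: insert_commute)
      ultimately show ?thesis using pair_step[OF G] by blast
    next
      case rest
      obtain c where c: "c \<in> V" "nbs E c = {} \<or> (\<exists>u. nbs E c = {u})"
        using leaf_or_isolated[OF G fin nc v0] by blast
      then obtain p where cp: "nbs E c = {p}" using rest(1) by blast
      have cD: "c \<in> D" using rest(2) c(1) cp by blast
      have pV: "p \<in> V" using nbs_graph[OF G, of p c] cp by simp
      show ?thesis
      proof (cases "p \<in> D")
        case True
        have "\<forall>x\<in>V - {c}. x \<notin> D \<longrightarrow> c \<notin> nbs E x"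
        proof (intro ballI impI notI)
          fix x assume x: "x \<in> V - {c}" "x \<notin> D" "c \<in> nbs E x"
          then have "x \<in> nbs E c" unfolding nbs_def by (simp add: insert_commute)
          then show False using cp True x(2) by simp
        qed
        then have h': "hits (V - {c}) (delE E {c}) D" by (rule remove_one[OF G h])
        obtain P where "pairing (V - {c}) (delE E {c}) D P"
          using less.hyps[OF cardl[of c "{c}"] _ graph_del[OF G] nc_del[OF nc] h'] c(1) fin by blast
        then show ?thesis using pairing_lift[OF _ cD] by blast
      next
        case False
        have h': "hits (V - {c, p}) (delE E {c, p}) D"
          by (rule hits_pair[OF G nc h cp], rule leaf_contra[OF G fin cp _ _ rest(2)])
        obtain P where "pairing (V - {c, p}) (delE E {c, p}) D P"
          using less.hyps[OF cardl[of c "{c, p}"] _ graph_del[OF G] nc_del[OF nc] h'] c(1) fin by blast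
        moreover have "{c, p} \<in> E" using cp unfolding nbs_def by (auto simp: insert_commute)
        ultimately show ?thesis using pair_step[OF G] by blast
      qed
    qed
  qed
qed

lemma dom_iff:
  assumes G: "graph V E" and fin: "finite V" and nc: "\<not> has_cycle E" and DV: "D' \<subseteq> V"
  shows "dominator_wins V E D' \<longleftrightarrow> transversal V (hyp_X V E) D'"
proof
  assume dw: "dominator_wins V E D'"
  show "transversal V (hyp_X V E) D'"
    unfolding transversal_def
  proof (intro conjI ballI DV notI)
    fix h assume h: "h \<in> hyp_X V E" "h \<inter> D' = {}"
    then obtain VF EF where "substructure V E VF EF h" unfolding hyp_X_def by blast
    then have "staller_wins V E D' {} {}" using staller_from_sub[OF G fin] h(2) by blast
    then show False using dw unfolding dominator_wins_def by blast
  qed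
next
  assume "transversal V (hyp_X V E) D'"
  then have "hits V E D'" unfolding transversal_def hits_def hyp_X_def by blast
  then obtain P where "pairing V E D' P" using pairing_exists[OF fin G nc] by blast
  then show "dominator_wins V E D'" by (rule pairing_dom)
qed

theorem proposition6p5:
  fixes V :: "'a set" and E :: "'a set set" and D :: "'a set"
  assumes "tree V E" and "D \<subseteq> V"
  shows "MBD_dominator_critical V E D \<longleftrightarrow>
           (hyp_X V E \<noteq> {} \<and> minimal_transversal V (hyp_X V E) D)"
proof -
  have G: "graph V E" and fin: "finite V" and nc: "\<not> has_cycle E"
    using assms(1) unfolding tree_def by auto
  define H where "H = hyp_X V E"
  have crit: "MBD_dominator_critical V E D \<longleftrightarrow>
      D \<noteq> {} \<and> transversal V H D \<and> (\<forall>v\<in>D. \<not> transversal V H (D - {v}))"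
  proof -
    have "dominator_wins V E D \<longleftrightarrow> transversal V H D" using dom_iff[OF G fin nc assms(2)] H_def by simp
    moreover have "\<forall>v\<in>D. dominator_wins V E (D - {v}) \<longleftrightarrow> transversal V H (D - {v})"
      using dom_iff[OF G fin nc] assms(2) H_def by blast
    ultimately show ?thesis unfolding MBD_dominator_critical_def by blast
  qed
  have mono: "transversal V H B" if "transversal V H A" "A \<subseteq> B" "B \<subseteq> V" for A B
    using that unfolding transversal_def by blast
  show ?thesis
    unfolding crit H_def[symmetric]
  proof
    assume c: "D \<noteq> {} \<and> transversal V H D \<and> (\<forall>v\<in>D. \<not> transversal V H (D - {v}))"
    have "H \<noteq> {}"
    proof
      assume "H = {}"
      moreover obtain v where "v \<in> D" using c by blast
      ultimately show False using c assms(2) unfolding transversal_def by blast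
    qed
    moreover have "minimal_transversal V H D"
      unfolding minimal_transversal_def
    proof (intro conjI allI impI notI)
      show "transversal V H D" using c by blast
    next
      fix T' assume T': "T' \<subset> D" "transversal V H T'"
      then obtain v where v: "v \<in> D" "v \<notin> T'" by blast
      have s1: "T' \<subseteq> D - {v}" using T'(1) v(2) by blast
      have s2: "D - {v} \<subseteq> V" using assms(2) by blast
      have "transversal V H (D - {v})" by (rule mono[OF T'(2) s1 s2])
      then show False using c v(1) by blast
    qed
    ultimately show "H \<noteq> {} \<and> minimal_transversal V H D" by blast
  next
    assume c: "H \<noteq> {} \<and> minimal_transversal V H D"
    then have tD: "transversal V H D" and minl: "\<forall>T'. T' \<subset> D \<longrightarrow> \<not> transversal V H T'"
      unfolding minimal_transversal_def by blast+
    have "D \<noteq> {}" using c tD unfolding transversal_def by blast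
    moreover have "\<forall>v\<in>D. \<not> transversal V H (D - {v})"
    proof
      fix v assume "v \<in> D"
      then have "D - {v} \<subset> D" by blast
      then show "\<not> transversal V H (D - {v})" using minl by blast
    qed
    ultimately show "D \<noteq> {} \<and> transversal V H D \<and> (\<forall>v\<in>D. \<not> transversal V H (D - {v}))"
      using tD by blast
  qed
qed


end
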